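(* Let $d>k\geq1$ be integers, let $\beta>0$ and $\lambda_k>2\sqrt{\beta}$, and let $A:=\mathrm{diag}(\lambda_k,\dots,\lambda_k,2\sqrt\beta,\dots,2\sqrt\beta)\in\mathbb{R}^{d\times d}$, with $\lambda_k$ repeated $k$ times and $2\sqrt\beta$ repeated $d-k$ times. Let $U_k\in\mathbb{R}^{d\times k}$ be the matrix of the first $k$ standard basis vectors and $U_{-k}\in\mathbb{R}^{d\times(d-k)}$ that of the last $d-k$ standard basis vectors. Let $\varepsilon\in(0,1)$. Then there exist $X_0\in\mathrm{St}(d,k)$ with $\cos\theta_k(U_k,X_0)>0$ and perturbations $(\Xi_t)_{t\geq0}\subset\mathbb{R}^{d\times k}$ satisfying, for all $t\geq0$, $U_k^\top\Xi_t=0$ and $\|U_{-k}^\top\Xi_t\|_2\leq 8(\lambda_k-2\sqrt\beta)\varepsilon$, such that the ANPM iterates $(X_t)_{t\geq0}$ on $A$ with momentum $\beta$ and these perturbations satisfy $\tan\theta_k(U_k,X_t)>\varepsilon$ for all $t\geq0$.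
   Context: $\mathrm{St}(d,k):=\{X\in\mathbb{R}^{d\times k}:X^\top X=I_k\}$. For $Y\in\mathbb{R}^{d\times k}$, $\mathrm{QR}(Y)$ is the pair $(X,R)$ with $Y=XR$, $X\in\mathrm{St}(d,k)$, $R$ upper triangular $k\times k$ with nonnegative diagonal (unique, $R$ invertible, when $Y$ has full column rank). For $U,X\in\mathrm{St}(d,k)$, $\theta_k(U,X):=\arccos\sigma_{\min}(U^\top X)\in[0,\pi/2]$. ANPM with momentum $\beta$ and perturbations $(\Xi_t)$: given $X_0\in\mathrm{St}(d,k)$, $(X_1,R_1)=\mathrm{QR}(\tfrac12 AX_0+\Xi_0)$, and for $t\geq1$, $Y_{t+1}=AX_t-\beta X_{t-1}R_t^{-1}+\Xi_t$, $(X_{t+1},R_{t+1})=\mathrm{QR}(Y_{t+1})$. *)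

theory Defs
  imports Complex_Main "Jordan_Normal_Form.Matrix"
begin

definition vnorm :: "real vec \<Rightarrow> real" where
  "vnorm v = sqrt (v \<bullet> v)"

definition opnorm2 :: "real mat \<Rightarrow> real" where
  "opnorm2 M = Sup {vnorm (M *\<^sub>v v) | v. v \<in> carrier_vec (dim_col M) \<and> vnorm v = 1}"

definition sigma_min :: "real mat \<Rightarrow> real" where
  "sigma_min M = Inf {vnorm (M *\<^sub>v v) | v. v \<in> carrier_vec (dim_col M) \<and> vnorm v = 1}"

definition stiefel :: "nat \<Rightarrow> nat \<Rightarrow> real mat set" where
  "stiefel d k = {X. X \<in> carrier_mat d k \<and> transpose_mat X * X = 1\<^sub>m k}"

definition theta :: "real mat \<Rightarrow> real mat \<Rightarrow> real" where
  "theta U X = arccos (sigma_min (transpose_mat U * X))"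

definition full_col_rank :: "real mat \<Rightarrow> bool" where
  "full_col_rank Y \<longleftrightarrow> (\<forall>v \<in> carrier_vec (dim_col Y). Y *\<^sub>v v = 0\<^sub>v (dim_row Y) \<longrightarrow> v = 0\<^sub>v (dim_col Y))"

definition is_qr :: "real mat \<Rightarrow> real mat \<Rightarrow> real mat \<Rightarrow> bool" where
  "is_qr Y X R \<longleftrightarrow> X \<in> stiefel (dim_row Y) (dim_col Y) \<and> R \<in> carrier_mat (dim_col Y) (dim_col Y)
     \<and> (\<forall>i j. j < i \<and> i < dim_col Y \<longrightarrow> R $$ (i,j) = 0)
     \<and> (\<forall>i < dim_col Y. R $$ (i,i) \<ge> 0) \<and> Y = X * R"

definition QR :: "real mat \<Rightarrow> real mat \<times> real mat" where
  "QR Y = (THE p. is_qr Y (fst p) (snd p))"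

definition minv :: "real mat \<Rightarrow> real mat" where
  "minv R = (THE S. S \<in> carrier_mat (dim_row R) (dim_row R) \<and> R * S = 1\<^sub>m (dim_row R) \<and> S * R = 1\<^sub>m (dim_row R))"

(* anpm_aux A beta X0 Xi t = ((X_t, R_t), (X_{t+1}, R_{t+1})); R_0 is unused *)
primrec anpm_aux :: "real mat \<Rightarrow> real \<Rightarrow> real mat \<Rightarrow> (nat \<Rightarrow> real mat) \<Rightarrow> nat
    \<Rightarrow> (real mat \<times> real mat) \<times> (real mat \<times> real mat)" where
  "anpm_aux A \<beta> X0 \<Xi> 0 = ((X0, undefined), QR ((1/2) \<cdot>\<^sub>m (A * X0) + \<Xi> 0))"
| "anpm_aux A \<beta> X0 \<Xi> (Suc t) =
     (let Xp = fst (fst (anpm_aux A \<beta> X0 \<Xi> t)); Xc = fst (snd (anpm_aux A \<beta> X0 \<Xi> t));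
          Rc = snd (snd (anpm_aux A \<beta> X0 \<Xi> t))
      in ((Xc, Rc), QR (A * Xc - \<beta> \<cdot>\<^sub>m (Xp * minv Rc) + \<Xi> (Suc t))))"

definition anpm_X :: "real mat \<Rightarrow> real \<Rightarrow> real mat \<Rightarrow> (nat \<Rightarrow> real mat) \<Rightarrow> nat \<Rightarrow> real mat" where
  "anpm_X A \<beta> X0 \<Xi> t = fst (fst (anpm_aux A \<beta> X0 \<Xi> t))"

(* pre-orthonormalisation matrix Y_{t+1} (so anpm_Y ... 0 = Y_1) *)
definition anpm_Y :: "real mat \<Rightarrow> real \<Rightarrow> real mat \<Rightarrow> (nat \<Rightarrow> real mat) \<Rightarrow> nat \<Rightarrow> real mat" where
  "anpm_Y A \<beta> X0 \<Xi> t = (if t = 0 then (1/2) \<cdot>\<^sub>m (A * X0) + \<Xi> 0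
     else (let p = anpm_aux A \<beta> X0 \<Xi> (t - 1) in
           A * fst (snd p) - \<beta> \<cdot>\<^sub>m (fst (fst p) * minv (snd (snd p))) + \<Xi> t))"

definition diagA :: "nat \<Rightarrow> nat \<Rightarrow> real \<Rightarrow> real \<Rightarrow> real mat" where
  "diagA d k lam \<beta> = mat d d (\<lambda>(i,j). if i = j then (if i < k then lam else 2 * sqrt \<beta>) else 0)"

definition Utop :: "nat \<Rightarrow> nat \<Rightarrow> real mat" where
  "Utop d k = mat d k (\<lambda>(i,j). if i = j then 1 else 0)"

definition Ubot :: "nat \<Rightarrow> nat \<Rightarrow> real mat" where
  "Ubot d k = mat d (d - k) (\<lambda>(i,j). if i = j + k then 1 else 0)"

end

theory Submission imports Defs begin

lemma R_unique:
  fixes R :: "real mat" and c :: real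
  assumes R: "R \<in> carrier_mat k k" and c: "c > 0"
    and tri: "\<forall>i j. j < i \<and> i < k \<longrightarrow> R $$ (i,j) = 0"
    and dg: "\<forall>i < k. R $$ (i,i) \<ge> 0"
    and RR: "transpose_mat R * R = (c*c) \<cdot>\<^sub>m 1\<^sub>m k"
  shows "R = c \<cdot>\<^sub>m 1\<^sub>m k"
proof -
  have ent: "(\<Sum>l<k. R $$ (l,i) * R $$ (l,j)) = (if i = j then c*c else 0)" if "i<k" "j<k" for i j
  proof -
    have "(transpose_mat R * R) $$ (i,j) = (if i = j then c*c else 0)" using RR that R by simp
    moreover have "(transpose_mat R * R) $$ (i,j) = (\<Sum>l<k. R $$ (l,i) * R $$ (l,j))"
      using that R by (simp add: scalar_prod_def lessThan_atLeast0)
    ultimately show ?thesis by simp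
  qed
  have row: "\<forall>j<k. R $$ (i,j) = (if i = j then c else 0)" if "i < k" for i
    using that
  proof (induction i rule: less_induct)
    case (less i)
    have z: "R $$ (l,i) = 0" if "l < k" "l \<noteq> i" for l
    proof (cases "l < i")
      case True
      then show ?thesis using less.IH[of l] less.prems that by auto
    next
      case False
      then show ?thesis using tri that less.prems by auto
    qed
    have s: "(\<Sum>l<k. R $$ (l,i) * R $$ (l,j)) = R $$ (i,i) * R $$ (i,j)" for j
    proof -
      have "(\<Sum>l<k. R $$ (l,i) * R $$ (l,j)) = (\<Sum>l<k. if l = i then R $$ (i,i) * R $$ (i,j) else 0)"
        by (rule sum.cong) (auto simp: z)
      also have "\<dots> = R $$ (i,i) * R $$ (i,j)" using less.prems by simp
      finally show ?thesis .
    qed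
    have ii: "R $$ (i,i) = c"
    proof -
      have "R $$ (i,i) * R $$ (i,i) = c * c" using ent[of i i] s[of i] less.prems by simp
      moreover have "R $$ (i,i) \<ge> 0" using dg less.prems by auto
      ultimately show ?thesis using c
        by (metis less_eq_real_def mult_less_cancel_left_pos mult_right_mono not_less_iff_gr_or_eq)
    qed
    show ?case
    proof (intro allI impI)
      fix j assume j: "j < k"
      show "R $$ (i,j) = (if i = j then c else 0)"
      proof (cases "i = j")
        case True then show ?thesis using ii by simp
      next
        case False
        then have "c * R $$ (i,j) = 0" using ent[of i j] s[of j] less.prems j ii by simp
        then show ?thesis using c False by simp
      qed
    qed
  qed
  show ?thesis
    by (rule eq_matI) (use R row in auto)
qed

lemma smult_smult_mat: "a \<cdot>\<^sub>m (b \<cdot>\<^sub>m (A::real mat)) = (a*b) \<cdot>\<^sub>m A"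
  by (rule eq_matI) auto

lemma one_smult_mat'[simp]: "(1::real) \<cdot>\<^sub>m A = A"
  by (rule eq_matI) auto

lemma mult_scal_one: "(X::real mat) \<in> carrier_mat d k \<Longrightarrow> X * (c \<cdot>\<^sub>m 1\<^sub>m k) = c \<cdot>\<^sub>m X"
  using mult_smult_distrib[OF _ one_carrier_mat[of k], of X d c] by simp

lemma QR_scaled:
  fixes X0 :: "real mat" and c :: real
  assumes X0: "X0 \<in> stiefel d k" and c: "c > 0"
  shows "QR (c \<cdot>\<^sub>m X0) = (X0, c \<cdot>\<^sub>m 1\<^sub>m k)"
proof -
  let ?Y = "c \<cdot>\<^sub>m X0"
  have X0c: "X0 \<in> carrier_mat d k" and X0o: "transpose_mat X0 * X0 = 1\<^sub>m k"
    using X0 by (auto simp: stiefel_def)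
  have dims: "dim_row ?Y = d" "dim_col ?Y = k" using X0c by auto
  have ex: "is_qr ?Y X0 (c \<cdot>\<^sub>m 1\<^sub>m k)"
    unfolding is_qr_def dims using X0 c mult_scal_one[OF X0c, of c] by auto
  have un: "X = X0 \<and> R = c \<cdot>\<^sub>m 1\<^sub>m k" if q: "is_qr ?Y X R" for X R
  proof -
    have Xc: "X \<in> carrier_mat d k" and Xo: "transpose_mat X * X = 1\<^sub>m k"
      and Rc: "R \<in> carrier_mat k k"
      and tri: "\<forall>i j. j < i \<and> i < k \<longrightarrow> R $$ (i,j) = 0"
      and dg: "\<forall>i < k. R $$ (i,i) \<ge> 0" and Y: "?Y = X * R"
      using q unfolding is_qr_def dims stiefel_def by auto
    have "transpose_mat ?Y * ?Y = transpose_mat R * R"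
    proof -
      have "transpose_mat ?Y * ?Y = (transpose_mat R * transpose_mat X) * (X * R)"
        using Y transpose_mult[OF Xc Rc] by simp
      also have "\<dots> = transpose_mat R * ((transpose_mat X * X) * R)"
        using Xc Rc by (simp add: assoc_mult_mat[of _ k k _ d _ k])
      also have "\<dots> = transpose_mat R * R" using Xo Rc by simp
      finally show ?thesis .
    qed
    moreover have "transpose_mat ?Y * ?Y = (c*c) \<cdot>\<^sub>m 1\<^sub>m k"
    proof -
      have "transpose_mat ?Y = c \<cdot>\<^sub>m transpose_mat X0" by (rule eq_matI) auto
      then have "transpose_mat ?Y * ?Y = c \<cdot>\<^sub>m (transpose_mat X0 * (c \<cdot>\<^sub>m X0))"
        using X0c by (simp add: mult_smult_assoc_mat[of _ k d _ k])
      also have "\<dots> = c \<cdot>\<^sub>m (c \<cdot>\<^sub>m (transpose_mat X0 * X0))"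
        using X0c by (simp add: mult_smult_distrib[of _ k d _ k])
      also have "\<dots> = (c*c) \<cdot>\<^sub>m 1\<^sub>m k" using X0o by (simp add: smult_smult_mat)
      finally show ?thesis .
    qed
    ultimately have RR: "transpose_mat R * R = (c*c) \<cdot>\<^sub>m 1\<^sub>m k" by simp
    have Req: "R = c \<cdot>\<^sub>m 1\<^sub>m k" by (rule R_unique[OF Rc c tri dg RR])
    have "c \<cdot>\<^sub>m X0 = X * (c \<cdot>\<^sub>m 1\<^sub>m k)" using Y Req by simp
    also have "\<dots> = c \<cdot>\<^sub>m X" by (rule mult_scal_one[OF Xc])
    finally have "c \<cdot>\<^sub>m X0 = c \<cdot>\<^sub>m X" .
    then have "(1/c) \<cdot>\<^sub>m (c \<cdot>\<^sub>m X0) = (1/c) \<cdot>\<^sub>m (c \<cdot>\<^sub>m X)" by (rule arg_cong)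
    then have "X = X0" using c unfolding smult_smult_mat by simp
    then show ?thesis using Req by simp
  qed
  show ?thesis unfolding QR_def
  proof (rule the_equality)
    show "is_qr ?Y (fst (X0, c \<cdot>\<^sub>m 1\<^sub>m k)) (snd (X0, c \<cdot>\<^sub>m 1\<^sub>m k))" using ex by simp
  next
    fix p assume "is_qr ?Y (fst p) (snd p)"
    then have "fst p = X0 \<and> snd p = c \<cdot>\<^sub>m 1\<^sub>m k" by (rule un)
    then show "p = (X0, c \<cdot>\<^sub>m 1\<^sub>m k)" by (simp add: prod_eq_iff)
  qed
qed

lemma minv_scaled:
  fixes c :: real assumes c: "c \<noteq> 0"
  shows "minv (c \<cdot>\<^sub>m 1\<^sub>m k) = (1/c) \<cdot>\<^sub>m 1\<^sub>m k"
  unfolding minv_def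
proof (rule the_equality)
  show "(1/c) \<cdot>\<^sub>m 1\<^sub>m k \<in> carrier_mat (dim_row (c \<cdot>\<^sub>m 1\<^sub>m k)) (dim_row (c \<cdot>\<^sub>m 1\<^sub>m k)) \<and>
    c \<cdot>\<^sub>m 1\<^sub>m k * ((1/c) \<cdot>\<^sub>m 1\<^sub>m k) = 1\<^sub>m (dim_row (c \<cdot>\<^sub>m 1\<^sub>m k)) \<and>
    (1/c) \<cdot>\<^sub>m 1\<^sub>m k * (c \<cdot>\<^sub>m 1\<^sub>m k) = 1\<^sub>m (dim_row (c \<cdot>\<^sub>m 1\<^sub>m k))"
  proof -
    have "c \<cdot>\<^sub>m 1\<^sub>m k * ((1/c) \<cdot>\<^sub>m 1\<^sub>m k) = 1\<^sub>m k"
      using mult_scal_one[of "c \<cdot>\<^sub>m 1\<^sub>m k" k k "1/c"] c unfolding smult_smult_mat by simp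
    moreover have "(1/c) \<cdot>\<^sub>m 1\<^sub>m k * (c \<cdot>\<^sub>m 1\<^sub>m k) = 1\<^sub>m k"
      using mult_scal_one[of "(1/c) \<cdot>\<^sub>m 1\<^sub>m k" k k "c"] c unfolding smult_smult_mat by simp
    ultimately show ?thesis by simp
  qed
next
  fix S assume S: "S \<in> carrier_mat (dim_row (c \<cdot>\<^sub>m 1\<^sub>m k)) (dim_row (c \<cdot>\<^sub>m 1\<^sub>m k)) \<and>
    c \<cdot>\<^sub>m 1\<^sub>m k * S = 1\<^sub>m (dim_row (c \<cdot>\<^sub>m 1\<^sub>m k)) \<and> S * (c \<cdot>\<^sub>m 1\<^sub>m k) = 1\<^sub>m (dim_row (c \<cdot>\<^sub>m 1\<^sub>m k))"
  then have Sc: "S \<in> carrier_mat k k" and e0: "c \<cdot>\<^sub>m 1\<^sub>m k * S = 1\<^sub>m k" by auto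
  have e: "c \<cdot>\<^sub>m S = 1\<^sub>m k" using e0 mult_smult_assoc_mat[OF one_carrier_mat Sc, of c] Sc by simp
  have "(1/c) \<cdot>\<^sub>m (c \<cdot>\<^sub>m S) = S" using c unfolding smult_smult_mat by simp
  then show "S = (1/c) \<cdot>\<^sub>m 1\<^sub>m k" using e by simp
qed

lemma mult_entry:
  fixes A B :: "real mat"
  assumes "A \<in> carrier_mat n m" "B \<in> carrier_mat m p" "i < n" "j < p"
  shows "(A * B) $$ (i,j) = (\<Sum>l<m. A $$ (i,l) * B $$ (l,j))"
  using assms by (simp add: scalar_prod_def lessThan_atLeast0)

lemma mult_vec_entry:
  fixes A :: "real mat"
  assumes "A \<in> carrier_mat n m" "v \<in> carrier_vec m" "i < n"
  shows "(A *\<^sub>v v) $ i = (\<Sum>l<m. A $$ (i,l) * v $ l)"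
  using assms by (simp add: scalar_prod_def lessThan_atLeast0)

definition X0m :: "nat \<Rightarrow> nat \<Rightarrow> real \<Rightarrow> real \<Rightarrow> real mat" where
  "X0m d k c s = mat d k (\<lambda>(i,j). if i = j then (if i = 0 then c else 1) else if i = k \<and> j = 0 then s else 0)"

definition Xim :: "nat \<Rightarrow> nat \<Rightarrow> real \<Rightarrow> nat \<Rightarrow> real mat" where
  "Xim d k g t = mat d k (\<lambda>(i,j). if i = k \<and> j = 0 then (if t = 0 then g/2 else g) else 0)"

lemma X0m_carrier[simp]: "X0m d k c s \<in> carrier_mat d k"
  by (simp add: X0m_def)

lemma X0m_dims[simp]: "dim_row (X0m d k c s) = d" "dim_col (X0m d k c s) = k"
  by (simp_all add: X0m_def)

lemma Xim_dims[simp]: "dim_row (Xim d k g t) = d" "dim_col (Xim d k g t) = k"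
  by (simp_all add: Xim_def)

lemma Xim_carrier[simp]: "Xim d k g t \<in> carrier_mat d k"
  by (simp add: Xim_def)

lemma X0m_stiefel:
  assumes k: "k < d" and cs: "c*c + s*s = 1"
  shows "X0m d k c s \<in> stiefel d k"
proof -
  let ?X = "X0m d k c s"
  have "transpose_mat ?X * ?X = 1\<^sub>m k"
  proof (rule eq_matI)
    fix i j assume i: "i < dim_row (1\<^sub>m k :: real mat)" and j: "j < dim_col (1\<^sub>m k :: real mat)"
    then have i: "i < k" and j: "j < k" by auto
    have "(transpose_mat ?X * ?X) $$ (i,j) = (\<Sum>l<d. ?X $$ (l,i) * ?X $$ (l,j))"
      using i j by (subst mult_entry[of _ k d _ k]) (auto intro!: sum.cong)
    also have "\<dots> = (\<Sum>l<d. (if l = i then (if i = j then (if i = 0 then c*c else 1) else 0) else 0)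
                      + (if l = k then (if i = 0 \<and> j = 0 then s*s else 0) else 0))"
      by (rule sum.cong) (use i j k in \<open>auto simp: X0m_def\<close>)
    also have "\<dots> = (if i = j then (if i = 0 then c*c else 1) else 0) + (if i = 0 \<and> j = 0 then s*s else 0)"
      using i k by (simp add: sum.distrib)
    also have "\<dots> = 1\<^sub>m k $$ (i,j)" using i j cs by auto
    finally show "(transpose_mat ?X * ?X) $$ (i,j) = 1\<^sub>m k $$ (i,j)" .
  qed auto
  then show ?thesis by (simp add: stiefel_def)
qed

lemma diagA_mult_entry:
  assumes B: "B \<in> carrier_mat d m" and i: "i < d" and j: "j < m"
  shows "(diagA d k lam \<beta> * B) $$ (i,j) = (if i < k then lam else 2 * sqrt \<beta>) * B $$ (i,j)"
proof -
  have "(diagA d k lam \<beta> * B) $$ (i,j) = (\<Sum>l<d. diagA d k lam \<beta> $$ (i,l) * B $$ (l,j))"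
    using B i j by (subst mult_entry[of _ d d _ m]) (auto simp: diagA_def)
  also have "\<dots> = (\<Sum>l<d. if l = i then (if i < k then lam else 2 * sqrt \<beta>) * B $$ (i,j) else 0)"
    by (rule sum.cong) (use i in \<open>auto simp: diagA_def\<close>)
  also have "\<dots> = (if i < k then lam else 2 * sqrt \<beta>) * B $$ (i,j)" using i by simp
  finally show ?thesis .
qed

lemma Utop_entry:
  assumes k: "k \<le> d" and B: "B \<in> carrier_mat d m" and i: "i < k" and j: "j < m"
  shows "(transpose_mat (Utop d k) * B) $$ (i,j) = B $$ (i,j)"
proof -
  have "(transpose_mat (Utop d k) * B) $$ (i,j) = (\<Sum>l<d. transpose_mat (Utop d k) $$ (i,l) * B $$ (l,j))"
    using B i j by (subst mult_entry[of _ k d _ m]) (auto simp: Utop_def)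
  also have "\<dots> = (\<Sum>l<d. if l = i then B $$ (i,j) else 0)"
    by (rule sum.cong) (use i k in \<open>auto simp: Utop_def\<close>)
  also have "\<dots> = B $$ (i,j)" using i k by simp
  finally show ?thesis .
qed

lemma Ubot_entry:
  assumes k: "k \<le> d" and B: "B \<in> carrier_mat d m" and i: "i < d - k" and j: "j < m"
  shows "(transpose_mat (Ubot d k) * B) $$ (i,j) = B $$ (i+k,j)"
proof -
  have "(transpose_mat (Ubot d k) * B) $$ (i,j) = (\<Sum>l<d. transpose_mat (Ubot d k) $$ (i,l) * B $$ (l,j))"
    using B i j by (subst mult_entry[of _ "d-k" d _ m]) (auto simp: Ubot_def)
  also have "\<dots> = (\<Sum>l<d. if l = i + k then B $$ (i+k,j) else 0)"
    by (rule sum.cong) (use i k in \<open>auto simp: Ubot_def\<close>)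
  also have "\<dots> = B $$ (i+k,j)" using i k by simp
  finally show ?thesis .
qed

lemma sq_sum_ge: "(v::real vec) \<in> carrier_vec k \<Longrightarrow> 0 < k \<Longrightarrow> v $ 0 * v $ 0 \<le> v \<bullet> v"
proof -
  assume v: "v \<in> carrier_vec k" and k: "0 < k"
  have "v \<bullet> v = (\<Sum>i\<in>{0..<k}. v $ i * v $ i)" using v by (simp add: scalar_prod_def)
  moreover have "v $ 0 * v $ 0 \<le> (\<Sum>i\<in>{0..<k}. v $ i * v $ i)"
    by (rule member_le_sum[where f="\<lambda>i. v $ i * v $ i"]) (use k in auto)
  ultimately show ?thesis by simp
qed

lemma Utop_carrier[simp]: "Utop d k \<in> carrier_mat d k" by (simp add: Utop_def)
lemma Ubot_carrier[simp]: "Ubot d k \<in> carrier_mat d (d-k)" by (simp add: Ubot_def)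

lemma Utop_dims[simp]: "dim_row (Utop d k) = d" "dim_col (Utop d k) = k" by (simp_all add: Utop_def)
lemma Ubot_dims[simp]: "dim_row (Ubot d k) = d" "dim_col (Ubot d k) = d - k" by (simp_all add: Ubot_def)

lemma theta_X0m:
  assumes k1: "1 \<le> k" and k: "k < d" and c: "0 < c" "c \<le> 1" and cs: "c*c + s*s = 1"
  shows "theta (Utop d k) (X0m d k c s) = arccos c"
proof -
  let ?M = "transpose_mat (Utop d k) * X0m d k c s"
  have Mc: "?M \<in> carrier_mat k k"
    by (rule mult_carrier_mat[of _ k d]) auto
  have Me: "?M $$ (i,j) = (if i = j then (if i = 0 then c else 1) else 0)" if "i < k" "j < k" for i j
    using Utop_entry[of k d "X0m d k c s" k i j] that k by (simp add: X0m_def)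
  have Mv: "(?M *\<^sub>v v) $ i = (if i = 0 then c else 1) * v $ i" if v: "v \<in> carrier_vec k" and i: "i < k" for v i
  proof -
    have "(?M *\<^sub>v v) $ i = (\<Sum>l<k. ?M $$ (i,l) * v $ l)" by (rule mult_vec_entry[OF Mc v i])
    also have "\<dots> = (\<Sum>l<k. if l = i then (if i = 0 then c else 1) * v $ i else 0)"
      by (rule sum.cong) (use i in \<open>auto simp: Me simp del: index_mult_mat\<close>)
    also have "\<dots> = (if i = 0 then c else 1) * v $ i" using i by simp
    finally show ?thesis .
  qed
  have nrm: "(?M *\<^sub>v v) \<bullet> (?M *\<^sub>v v) = v \<bullet> v - (1 - c*c) * (v $ 0 * v $ 0)" if v: "v \<in> carrier_vec k" for v
  proof -
    have "(?M *\<^sub>v v) \<bullet> (?M *\<^sub>v v) = (\<Sum>i\<in>{0..<k}. (?M *\<^sub>v v) $ i * (?M *\<^sub>v v) $ i)"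
    proof -
      have "dim_vec (?M *\<^sub>v v) = k" using Mc by simp
      then show ?thesis unfolding scalar_prod_def by simp
    qed
    also have "\<dots> = (\<Sum>i\<in>{0..<k}. v $ i * v $ i + (if i = 0 then (c*c - 1) * (v $ 0 * v $ 0) else 0))"
      by (rule sum.cong) (use v in \<open>auto simp: Mv algebra_simps simp del: index_mult_mat_vec\<close>)
    also have "\<dots> = v \<bullet> v - (1 - c*c) * (v $ 0 * v $ 0)"
      using v k1 by (simp add: sum.distrib scalar_prod_def algebra_simps)
    finally show ?thesis .
  qed
  have lb: "c \<le> vnorm (?M *\<^sub>v v)" if v: "v \<in> carrier_vec k" "vnorm v = 1" for v
  proof -
    have vv: "v \<bullet> v = 1" using v(2) unfolding vnorm_def by simp
    have "v $ 0 * v $ 0 \<le> 1" using sq_sum_ge[OF v(1)] k1 vv by simp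
    moreover have "c * c \<le> 1" using c by (simp add: mult_le_one)
    ultimately have "(1 - c*c) * (v $ 0 * v $ 0) \<le> (1 - c*c) * 1"
      by (intro mult_left_mono) auto
    then have "c * c \<le> (?M *\<^sub>v v) \<bullet> (?M *\<^sub>v v)" using nrm[OF v(1)] vv by simp
    then have "sqrt (c*c) \<le> vnorm (?M *\<^sub>v v)" unfolding vnorm_def by (rule real_sqrt_le_mono)
    then show ?thesis using c by simp
  qed
  have e0: "unit_vec k 0 \<in> carrier_vec k" "vnorm (unit_vec k 0) = (1::real)"
    using k1 by (auto simp: vnorm_def)
  have at0: "vnorm (?M *\<^sub>v unit_vec k 0) = c"
  proof -
    have "(?M *\<^sub>v unit_vec k 0) \<bullet> (?M *\<^sub>v unit_vec k 0) = c * c"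
      using nrm[OF e0(1)] k1 e0(2) by (simp add: vnorm_def)
    then show ?thesis using c by (simp add: vnorm_def)
  qed
  have "sigma_min ?M = c"
    unfolding sigma_min_def
  proof (rule cInf_eq_minimum)
    show "c \<in> {vnorm (?M *\<^sub>v v) |v. v \<in> carrier_vec (dim_col ?M) \<and> vnorm v = 1}"
      using e0 at0 Mc by (auto intro!: exI[of _ "unit_vec k 0"])
  next
    fix x assume "x \<in> {vnorm (?M *\<^sub>v v) |v. v \<in> carrier_vec (dim_col ?M) \<and> vnorm v = 1}"
    then show "c \<le> x" using lb Mc by auto
  qed
  then show ?thesis by (simp add: theta_def)
qed

lemma opnorm_Xi:
  assumes k1: "1 \<le> k" and k: "k < d"
  shows "opnorm2 (transpose_mat (Ubot d k) * Xim d k g t) \<le> \<bar>g\<bar>"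
proof -
  let ?N = "transpose_mat (Ubot d k) * Xim d k g t"
  define \<sigma> where "\<sigma> = (if t = 0 then g/2 else g)"
  have sg: "\<bar>\<sigma>\<bar> \<le> \<bar>g\<bar>" by (auto simp: \<sigma>_def)
  have Nc: "?N \<in> carrier_mat (d-k) k" by (rule mult_carrier_mat[of _ "d-k" d]) auto
  have Ne: "?N $$ (i,j) = (if i = 0 \<and> j = 0 then \<sigma> else 0)" if "i < d-k" "j < k" for i j
    using Ubot_entry[of k d "Xim d k g t" k i j] that k by (auto simp: Xim_def \<sigma>_def)
  have Nv: "(?N *\<^sub>v v) $ i = (if i = 0 then \<sigma> * v $ 0 else 0)" if v: "v \<in> carrier_vec k" and i: "i < d-k" for v i
  proof -
    have "(?N *\<^sub>v v) $ i = (\<Sum>l<k. ?N $$ (i,l) * v $ l)" by (rule mult_vec_entry[OF Nc v i])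
    also have "\<dots> = (\<Sum>l<k. if l = 0 then (if i = 0 then \<sigma> * v $ 0 else 0) else 0)"
      by (rule sum.cong) (use i in \<open>auto simp: Ne simp del: index_mult_mat\<close>)
    also have "\<dots> = (if i = 0 then \<sigma> * v $ 0 else 0)" using k1 by simp
    finally show ?thesis .
  qed
  have nrm: "(?N *\<^sub>v v) \<bullet> (?N *\<^sub>v v) = \<sigma> * \<sigma> * (v $ 0 * v $ 0)" if v: "v \<in> carrier_vec k" for v
  proof -
    have dv: "dim_vec (?N *\<^sub>v v) = d - k" using Nc by simp
    have "(?N *\<^sub>v v) \<bullet> (?N *\<^sub>v v) = (\<Sum>i\<in>{0..<d-k}. (?N *\<^sub>v v) $ i * (?N *\<^sub>v v) $ i)"
      unfolding scalar_prod_def dv by simp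
    also have "\<dots> = (\<Sum>i\<in>{0..<d-k}. if i = 0 then \<sigma> * \<sigma> * (v $ 0 * v $ 0) else 0)"
      by (rule sum.cong) (use v in \<open>auto simp: Nv algebra_simps simp del: index_mult_mat_vec\<close>)
    also have "\<dots> = \<sigma> * \<sigma> * (v $ 0 * v $ 0)" using k by simp
    finally show ?thesis .
  qed
  have ub: "vnorm (?N *\<^sub>v v) \<le> \<bar>g\<bar>" if v: "v \<in> carrier_vec k" "vnorm v = 1" for v
  proof -
    have vv: "v \<bullet> v = 1" using v(2) unfolding vnorm_def by simp
    have "v $ 0 * v $ 0 \<le> 1" using sq_sum_ge[OF v(1)] k1 vv by simp
    then have "\<sigma> * \<sigma> * (v $ 0 * v $ 0) \<le> \<sigma> * \<sigma> * 1"
      by (intro mult_left_mono) auto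
    then have "sqrt ((?N *\<^sub>v v) \<bullet> (?N *\<^sub>v v)) \<le> sqrt (\<sigma> * \<sigma>)"
      using nrm[OF v(1)] by (intro real_sqrt_le_mono) simp
    then show ?thesis using sg unfolding vnorm_def by simp
  qed
  have e0: "unit_vec k 0 \<in> carrier_vec k" "vnorm (unit_vec k 0) = (1::real)"
    using k1 by (auto simp: vnorm_def)
  show ?thesis
    unfolding opnorm2_def
  proof (rule cSup_least)
    show "{vnorm (?N *\<^sub>v v) |v. v \<in> carrier_vec (dim_col ?N) \<and> vnorm v = 1} \<noteq> {}"
    proof -
      have "dim_col ?N = k" using Nc by simp
      then have "vnorm (?N *\<^sub>v unit_vec k 0) \<in> {vnorm (?N *\<^sub>v v) |v. v \<in> carrier_vec (dim_col ?N) \<and> vnorm v = 1}"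
        using e0 by auto
      then show ?thesis by blast
    qed
  next
    fix x assume "x \<in> {vnorm (?N *\<^sub>v v) |v. v \<in> carrier_vec (dim_col ?N) \<and> vnorm v = 1}"
    then show "x \<le> \<bar>g\<bar>" using ub Nc by auto
  qed
qed

lemma Utop_Xi:
  assumes k: "k < d"
  shows "transpose_mat (Utop d k) * Xim d k g t = 0\<^sub>m k k"
proof (rule eq_matI)
  fix i j assume "i < dim_row (0\<^sub>m k k :: real mat)" "j < dim_col (0\<^sub>m k k :: real mat)"
  then have i: "i < k" and j: "j < k" by auto
  show "(transpose_mat (Utop d k) * Xim d k g t) $$ (i,j) = 0\<^sub>m k k $$ (i,j)"
    using Utop_entry[of k d "Xim d k g t" k i j] i j k by (auto simp: Xim_def)
qed auto

lemma diagA_dims[simp]: "dim_row (diagA d k lam \<beta>) = d" "dim_col (diagA d k lam \<beta>) = d"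
  by (simp_all add: diagA_def)
lemma diagA_carrier[simp]: "diagA d k lam \<beta> \<in> carrier_mat d d"
  by (simp add: diagA_def)

lemma step0:
  assumes k: "k < d"
  shows "(1/2) \<cdot>\<^sub>m (diagA d k lam \<beta> * X0m d k c s) + Xim d k ((lam - 2 * sqrt \<beta>) * s) 0
         = (lam/2) \<cdot>\<^sub>m X0m d k c s"
proof (rule eq_matI)
  fix i j assume "i < dim_row ((lam/2) \<cdot>\<^sub>m X0m d k c s)" "j < dim_col ((lam/2) \<cdot>\<^sub>m X0m d k c s)"
  then have i: "i < d" and j: "j < k" by auto
  have "(diagA d k lam \<beta> * X0m d k c s) $$ (i,j) = (if i < k then lam else 2 * sqrt \<beta>) * X0m d k c s $$ (i,j)"
    by (rule diagA_mult_entry[OF X0m_carrier i j])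
  moreover have "((1/2) \<cdot>\<^sub>m (diagA d k lam \<beta> * X0m d k c s) + Xim d k ((lam - 2 * sqrt \<beta>) * s) 0) $$ (i,j)
      = 1/2 * (diagA d k lam \<beta> * X0m d k c s) $$ (i,j) + Xim d k ((lam - 2 * sqrt \<beta>) * s) 0 $$ (i,j)"
    using i j by (simp del: index_mult_mat(1))
  ultimately show "((1/2) \<cdot>\<^sub>m (diagA d k lam \<beta> * X0m d k c s) + Xim d k ((lam - 2 * sqrt \<beta>) * s) 0) $$ (i,j)
      = ((lam/2) \<cdot>\<^sub>m X0m d k c s) $$ (i,j)"
    using i j k by (simp add: X0m_def Xim_def algebra_simps del: index_mult_mat(1)) (auto simp: field_simps)
qed (auto simp: diagA_def)

lemma stepS:
  assumes k: "k < d" and r: "r \<noteq> 0"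
  shows "diagA d k lam \<beta> * X0m d k c s - \<beta> \<cdot>\<^sub>m (X0m d k c s * minv (r \<cdot>\<^sub>m 1\<^sub>m k))
         + Xim d k ((lam - 2 * sqrt \<beta>) * s) (Suc t) = (lam - \<beta>/r) \<cdot>\<^sub>m X0m d k c s"
proof -
  have m: "X0m d k c s * minv (r \<cdot>\<^sub>m 1\<^sub>m k) = (1/r) \<cdot>\<^sub>m X0m d k c s"
    using minv_scaled[OF r, of k] mult_scal_one[OF X0m_carrier] by simp
  show ?thesis unfolding m
  proof (rule eq_matI)
    fix i j assume "i < dim_row ((lam - \<beta>/r) \<cdot>\<^sub>m X0m d k c s)" "j < dim_col ((lam - \<beta>/r) \<cdot>\<^sub>m X0m d k c s)"
    then have i: "i < d" and j: "j < k" by auto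
    have "(diagA d k lam \<beta> * X0m d k c s) $$ (i,j) = (if i < k then lam else 2 * sqrt \<beta>) * X0m d k c s $$ (i,j)"
      by (rule diagA_mult_entry[OF X0m_carrier i j])
    moreover have "(diagA d k lam \<beta> * X0m d k c s - \<beta> \<cdot>\<^sub>m ((1/r) \<cdot>\<^sub>m X0m d k c s)
         + Xim d k ((lam - 2 * sqrt \<beta>) * s) (Suc t)) $$ (i,j) =
         (diagA d k lam \<beta> * X0m d k c s) $$ (i,j) - \<beta> * ((1/r) * X0m d k c s $$ (i,j)) + Xim d k ((lam - 2 * sqrt \<beta>) * s) (Suc t) $$ (i,j)"
      using i j by (simp del: index_mult_mat(1))
    ultimately show "(diagA d k lam \<beta> * X0m d k c s - \<beta> \<cdot>\<^sub>m ((1/r) \<cdot>\<^sub>m X0m d k c s)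
         + Xim d k ((lam - 2 * sqrt \<beta>) * s) (Suc t)) $$ (i,j) = ((lam - \<beta>/r) \<cdot>\<^sub>m X0m d k c s) $$ (i,j)"
      using i j k by (simp add: X0m_def Xim_def algebra_simps del: index_mult_mat(1))
  qed (auto simp: diagA_def)
qed

lemma fcr_scaled:
  fixes X0 :: "real mat"
  assumes X0: "X0 \<in> stiefel d k" and c: "c \<noteq> 0"
  shows "full_col_rank (c \<cdot>\<^sub>m X0)"
  unfolding full_col_rank_def
proof (intro ballI impI)
  have X0c: "X0 \<in> carrier_mat d k" and X0o: "transpose_mat X0 * X0 = 1\<^sub>m k"
    using X0 by (auto simp: stiefel_def)
  fix v assume v0: "v \<in> carrier_vec (dim_col (c \<cdot>\<^sub>m X0))"
    and z: "(c \<cdot>\<^sub>m X0) *\<^sub>v v = 0\<^sub>v (dim_row (c \<cdot>\<^sub>m X0))"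
  have v: "v \<in> carrier_vec k" using v0 X0c by simp
  have z': "(c \<cdot>\<^sub>m X0) *\<^sub>v v = 0\<^sub>v d" using z X0c by simp
  have T: "transpose_mat X0 * (c \<cdot>\<^sub>m X0) = c \<cdot>\<^sub>m 1\<^sub>m k"
    using mult_smult_distrib[of "transpose_mat X0" k d X0 k c] X0c X0o by simp
  have "(transpose_mat X0 * (c \<cdot>\<^sub>m X0)) *\<^sub>v v = transpose_mat X0 *\<^sub>v ((c \<cdot>\<^sub>m X0) *\<^sub>v v)"
    by (rule assoc_mult_mat_vec[of _ k d _ k]) (use X0c v in auto)
  then have e: "(c \<cdot>\<^sub>m 1\<^sub>m k) *\<^sub>v v = transpose_mat X0 *\<^sub>v 0\<^sub>v d" using T z' by simp
  show "v = 0\<^sub>v (dim_col (c \<cdot>\<^sub>m X0))"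
  proof (rule eq_vecI)
    fix i assume "i < dim_vec (0\<^sub>v (dim_col (c \<cdot>\<^sub>m X0)) :: real vec)"
    then have i: "i < k" using X0c by simp
    have "((c \<cdot>\<^sub>m 1\<^sub>m k) *\<^sub>v v) $ i = (\<Sum>l<k. (c \<cdot>\<^sub>m 1\<^sub>m k) $$ (i,l) * v $ l)"
      by (rule mult_vec_entry[OF _ v i]) simp
    also have "\<dots> = (\<Sum>l<k. if l = i then c * v $ i else 0)"
      by (rule sum.cong) (use i in auto)
    also have "\<dots> = c * v $ i" using i by simp
    finally have a: "((c \<cdot>\<^sub>m 1\<^sub>m k) *\<^sub>v v) $ i = c * v $ i" .
    have "(transpose_mat X0 *\<^sub>v 0\<^sub>v d) $ i = (\<Sum>l<d. transpose_mat X0 $$ (i,l) * 0\<^sub>v d $ l)"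
      by (rule mult_vec_entry[OF _ _ i]) (use X0c in auto)
    also have "\<dots> = 0" by (rule sum.neutral) auto
    finally have "c * v $ i = 0" using a e by simp
    then show "v $ i = 0\<^sub>v (dim_col (c \<cdot>\<^sub>m X0)) $ i" using c i X0c by simp
  qed (use v X0c in auto)
qed

primrec csq :: "real \<Rightarrow> real \<Rightarrow> nat \<Rightarrow> real" where
  "csq lam \<beta> 0 = lam / 2"
| "csq lam \<beta> (Suc t) = lam - \<beta> / csq lam \<beta> t"

lemma csq_gt:
  assumes b: "\<beta> > 0" and l: "lam > 2 * sqrt \<beta>"
  shows "csq lam \<beta> t > sqrt \<beta>"
proof (induction t)
  case 0 then show ?case using l by simp
next
  case (Suc t)
  have sb: "sqrt \<beta> > 0" using b by simp
  have "\<beta> / csq lam \<beta> t < \<beta> / sqrt \<beta>"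
  proof -
    have "csq lam \<beta> t > 0" using Suc sb by linarith
    then have "0 < csq lam \<beta> t * sqrt \<beta>" using sb by (rule mult_pos_pos)
    then show ?thesis by (rule divide_strict_left_mono[OF Suc.IH b])
  qed
  also have "\<beta> / sqrt \<beta> = sqrt \<beta>" using b by (simp add: real_div_sqrt)
  finally show ?case using l by simp
qed

lemma anpm_aux_X0m:
  assumes k: "k < d" and cs: "c*c + s*s = 1" and b: "\<beta> > 0" and l: "lam > 2 * sqrt \<beta>"
  shows "fst (fst (anpm_aux (diagA d k lam \<beta>) \<beta> (X0m d k c s) (Xim d k ((lam - 2 * sqrt \<beta>) * s)) t)) = X0m d k c s
    \<and> snd (anpm_aux (diagA d k lam \<beta>) \<beta> (X0m d k c s) (Xim d k ((lam - 2 * sqrt \<beta>) * s)) t)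
        = (X0m d k c s, csq lam \<beta> t \<cdot>\<^sub>m 1\<^sub>m k)"
proof (induction t)
  case 0
  have "sqrt \<beta> > 0" using b by simp
  then have "lam / 2 > 0" using l by linarith
  then have q: "QR ((lam/2) \<cdot>\<^sub>m X0m d k c s) = (X0m d k c s, (lam/2) \<cdot>\<^sub>m 1\<^sub>m k)"
    by (rule QR_scaled[OF X0m_stiefel[OF k cs]])
  have "anpm_aux (diagA d k lam \<beta>) \<beta> (X0m d k c s) (Xim d k ((lam - 2 * sqrt \<beta>) * s)) 0
     = ((X0m d k c s, undefined), QR ((lam/2) \<cdot>\<^sub>m X0m d k c s))"
    unfolding anpm_aux.simps step0[OF k] by (rule refl)
  then show ?case unfolding q by simp
next
  case (Suc t)
  have sb: "sqrt \<beta> > 0" using b by simp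
  have p: "csq lam \<beta> t > 0" using csq_gt[OF b l, of t] sb by linarith
  have p2: "csq lam \<beta> (Suc t) > 0" using csq_gt[OF b l, of "Suc t"] sb by linarith
  have q: "QR (csq lam \<beta> (Suc t) \<cdot>\<^sub>m X0m d k c s) = (X0m d k c s, csq lam \<beta> (Suc t) \<cdot>\<^sub>m 1\<^sub>m k)"
    by (rule QR_scaled[OF X0m_stiefel[OF k cs] p2])
  have st: "diagA d k lam \<beta> * X0m d k c s - \<beta> \<cdot>\<^sub>m (X0m d k c s * minv (csq lam \<beta> t \<cdot>\<^sub>m 1\<^sub>m k))
         + Xim d k ((lam - 2 * sqrt \<beta>) * s) (Suc t) = csq lam \<beta> (Suc t) \<cdot>\<^sub>m X0m d k c s"
    using stepS[OF k, of "csq lam \<beta> t" lam \<beta> c s t] p by simp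
  obtain P Q where PQ: "anpm_aux (diagA d k lam \<beta>) \<beta> (X0m d k c s) (Xim d k ((lam - 2 * sqrt \<beta>) * s)) t = (P, Q)"
    by (cases "anpm_aux (diagA d k lam \<beta>) \<beta> (X0m d k c s) (Xim d k ((lam - 2 * sqrt \<beta>) * s)) t")
  have P: "fst P = X0m d k c s" and Q: "Q = (X0m d k c s, csq lam \<beta> t \<cdot>\<^sub>m 1\<^sub>m k)"
    using Suc.IH PQ by auto
  have "anpm_aux (diagA d k lam \<beta>) \<beta> (X0m d k c s) (Xim d k ((lam - 2 * sqrt \<beta>) * s)) (Suc t)
     = ((X0m d k c s, csq lam \<beta> t \<cdot>\<^sub>m 1\<^sub>m k), QR (csq lam \<beta> (Suc t) \<cdot>\<^sub>m X0m d k c s))"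
    unfolding anpm_aux.simps PQ Let_def P Q fst_conv snd_conv st by (rule refl)
  then have e: "anpm_aux (diagA d k lam \<beta>) \<beta> (X0m d k c s) (Xim d k ((lam - 2 * sqrt \<beta>) * s)) (Suc t)
     = ((X0m d k c s, csq lam \<beta> t \<cdot>\<^sub>m 1\<^sub>m k), (X0m d k c s, csq lam \<beta> (Suc t) \<cdot>\<^sub>m 1\<^sub>m k))"
    unfolding q .
  show ?case unfolding e by simp
qed

lemma anpm_X0m:
  assumes k: "k < d" and cs: "c*c + s*s = 1" and b: "\<beta> > 0" and l: "lam > 2 * sqrt \<beta>"
  shows "anpm_X (diagA d k lam \<beta>) \<beta> (X0m d k c s) (Xim d k ((lam - 2 * sqrt \<beta>) * s)) t = X0m d k c s"
  using anpm_aux_X0m[OF assms, of t] by (simp add: anpm_X_def)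

lemma anpm_Y0m:
  assumes k: "k < d" and cs: "c*c + s*s = 1" and b: "\<beta> > 0" and l: "lam > 2 * sqrt \<beta>"
  shows "anpm_Y (diagA d k lam \<beta>) \<beta> (X0m d k c s) (Xim d k ((lam - 2 * sqrt \<beta>) * s)) t = csq lam \<beta> t \<cdot>\<^sub>m X0m d k c s"
proof (cases t)
  case 0
  then show ?thesis unfolding anpm_Y_def using step0[OF k] by simp
next
  case (Suc n)
  have sb: "sqrt \<beta> > 0" using b by simp
  have p: "csq lam \<beta> n > 0" using csq_gt[OF b l, of n] sb by linarith
  obtain P Q where PQ: "anpm_aux (diagA d k lam \<beta>) \<beta> (X0m d k c s) (Xim d k ((lam - 2 * sqrt \<beta>) * s)) n = (P, Q)"
    by (cases "anpm_aux (diagA d k lam \<beta>) \<beta> (X0m d k c s) (Xim d k ((lam - 2 * sqrt \<beta>) * s)) n")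
  have P: "fst P = X0m d k c s" and Q: "Q = (X0m d k c s, csq lam \<beta> n \<cdot>\<^sub>m 1\<^sub>m k)"
    using anpm_aux_X0m[OF assms, of n] PQ by auto
  show ?thesis
    unfolding anpm_Y_def Suc using PQ P Q stepS[OF k, of "csq lam \<beta> n" lam \<beta> c s n] p by simp
qed

theorem theorem3:
  fixes d k :: nat and \<beta> lam \<epsilon> :: real
  assumes "1 \<le> k" "k < d" "\<beta> > 0" "lam > 2 * sqrt \<beta>" "0 < \<epsilon>" "\<epsilon> < 1"
  shows "\<exists>X0 \<Xi>. X0 \<in> stiefel d k \<and> cos (theta (Utop d k) X0) > 0
     \<and> (\<forall>t. \<Xi> t \<in> carrier_mat d k
            \<and> transpose_mat (Utop d k) * \<Xi> t = 0\<^sub>m k k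
            \<and> opnorm2 (transpose_mat (Ubot d k) * \<Xi> t) \<le> 8 * (lam - 2 * sqrt \<beta>) * \<epsilon>)
     \<and> (\<forall>t. full_col_rank (anpm_Y (diagA d k lam \<beta>) \<beta> X0 \<Xi> t))
     \<and> (\<forall>t. tan (theta (Utop d k) (anpm_X (diagA d k lam \<beta>) \<beta> X0 \<Xi> t)) > \<epsilon>)"
proof -
  note k1 = assms(1) and k = assms(2) and b = assms(3) and l = assms(4) and e = assms(5,6)
  define q where "q = sqrt (1 + 4 * \<epsilon> * \<epsilon>)"
  define c where "c = 1 / q"
  define s where "s = 2 * \<epsilon> * c"
  have q1: "q \<ge> 1" unfolding q_def using e by simp
  have qq: "q * q = 1 + 4 * \<epsilon> * \<epsilon>" unfolding q_def using e by simp
  have c0: "c > 0" and c1: "c \<le> 1" unfolding c_def using q1 by auto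
  have s0: "s > 0" unfolding s_def using c0 e by simp
  have s2: "s \<le> 2 * \<epsilon>" unfolding s_def using c1 e by simp
  have cs: "c*c + s*s = 1"
  proof -
    have "c*c + s*s = (1 + 4 * \<epsilon> * \<epsilon>) / (q*q)" unfolding s_def c_def using q1 by (simp add: field_simps)
    moreover have "1 + 4 * \<epsilon> * \<epsilon> > 0" using e by (simp add: add_pos_nonneg)
    ultimately show ?thesis using qq by simp
  qed
  define X0 where "X0 = X0m d k c s"
  define g where "g = (lam - 2 * sqrt \<beta>) * s"
  define \<Xi> where "\<Xi> = Xim d k g"
  have th: "theta (Utop d k) X0 = arccos c" unfolding X0_def by (rule theta_X0m[OF k1 k c0 c1 cs])
  have cosc: "cos (arccos c) = c" using c0 c1 by simp
  have tanc: "tan (arccos c) = 2 * \<epsilon>"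
  proof -
    have "sin (arccos c) = sqrt (1 - c\<^sup>2)" using c0 c1 by (simp add: sin_arccos_abs)
    also have "1 - c\<^sup>2 = s\<^sup>2" using cs by (simp add: power2_eq_square)
    also have "sqrt (s\<^sup>2) = s" using s0 by simp
    finally have "sin (arccos c) = s" .
    then show ?thesis unfolding tan_def cosc s_def using c0 by simp
  qed
  have g0: "g \<ge> 0" unfolding g_def using l s0 by simp
  have gb: "\<bar>g\<bar> \<le> 8 * (lam - 2 * sqrt \<beta>) * \<epsilon>"
  proof -
    have "g \<le> (lam - 2 * sqrt \<beta>) * (2 * \<epsilon>)" unfolding g_def using l s2 by (intro mult_left_mono) auto
    also have "\<dots> \<le> 8 * (lam - 2 * sqrt \<beta>) * \<epsilon>" using l e by simp
    finally show ?thesis using g0 by simp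
  qed
  have sb: "sqrt \<beta> > 0" using b by simp
  show ?thesis
    apply (rule exI[of _ X0], rule exI[of _ \<Xi>])
  proof (intro conjI allI)
    show "X0 \<in> stiefel d k" unfolding X0_def by (rule X0m_stiefel[OF k cs])
    show "cos (theta (Utop d k) X0) > 0" unfolding th cosc by (rule c0)
  next
    fix t
    show "\<Xi> t \<in> carrier_mat d k" unfolding \<Xi>_def by simp
    show "transpose_mat (Utop d k) * \<Xi> t = 0\<^sub>m k k" unfolding \<Xi>_def by (rule Utop_Xi[OF k])
    show "opnorm2 (transpose_mat (Ubot d k) * \<Xi> t) \<le> 8 * (lam - 2 * sqrt \<beta>) * \<epsilon>"
      unfolding \<Xi>_def using opnorm_Xi[OF k1 k, of g t] gb by linarith
  next
    fix t
    have p: "csq lam \<beta> t \<noteq> 0" using csq_gt[OF b l, of t] sb by linarith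
    show "full_col_rank (anpm_Y (diagA d k lam \<beta>) \<beta> X0 \<Xi> t)"
    proof -
      have "anpm_Y (diagA d k lam \<beta>) \<beta> X0 \<Xi> t = csq lam \<beta> t \<cdot>\<^sub>m X0m d k c s"
        unfolding \<Xi>_def g_def X0_def by (rule anpm_Y0m[OF k cs b l])
      then show ?thesis using fcr_scaled[OF X0m_stiefel[OF k cs] p] by simp
    qed
  next
    fix t
    show "tan (theta (Utop d k) (anpm_X (diagA d k lam \<beta>) \<beta> X0 \<Xi> t)) > \<epsilon>"
    proof -
      have "anpm_X (diagA d k lam \<beta>) \<beta> X0 \<Xi> t = X0"
        unfolding \<Xi>_def g_def X0_def by (rule anpm_X0m[OF k cs b l])
      then show ?thesis using th tanc e by simp
    qed
  qed
qed

end
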